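(* Let $J\ge2$ be an integer. For $x\in\mathbb R^J$ put $x_{J+1}:=x_1$, $\min x:=\min\{x_1,\dots,x_J\}$, $\max x:=\max\{x_1,\dots,x_J\}$. Then $$\max_{\substack{x\in\mathbb R^J\setminus\{0\}\\ \min x\le0\le\max x}}\frac{|x|^2}{\sum_{j=1}^J(x_{j+1}-x_j)^2}=\max_{y\in\mathbb R^J\setminus\{0\}}\frac{|y|^2}{\sum_{j=1}^J(y_{j+1}-y_j)^2+(y_1+y_J)^2}=\frac{1}{2(1-\cos(\pi/J))},$$ where also $y_{J+1}:=y_1$.
   Context: $|x|$ denotes the Euclidean norm. *)

theory Defs
  imports Complex_Main
begin

text \<open>Vectors in R^J are represented as functions nat => real, of which only the
  coordinates 1..J are used. Cyclic successor index: J+1 is identified with 1.\<close>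

definition cyc_succ :: "nat \<Rightarrow> nat \<Rightarrow> nat" where
  "cyc_succ J j = (if j = J then 1 else j + 1)"

definition sqnorm :: "nat \<Rightarrow> (nat \<Rightarrow> real) \<Rightarrow> real" where
  "sqnorm J x = (\<Sum>j=1..J. (x j)^2)"

definition cyc_energy :: "nat \<Rightarrow> (nat \<Rightarrow> real) \<Rightarrow> real" where
  "cyc_energy J x = (\<Sum>j=1..J. (x (cyc_succ J j) - x j)^2)"

definition nonzero_vec :: "nat \<Rightarrow> (nat \<Rightarrow> real) \<Rightarrow> bool" where
  "nonzero_vec J x = (\<exists>j\<in>{1..J}. x j \<noteq> 0)"

definition quot_set1 :: "nat \<Rightarrow> real set" where
  "quot_set1 J = {sqnorm J x / cyc_energy J x | x.
      nonzero_vec J x \<and> Min (x ` {1..J}) \<le> 0 \<and> 0 \<le> Max (x ` {1..J})}"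

definition quot_set2 :: "nat \<Rightarrow> real set" where
  "quot_set2 J = {sqnorm J y / (cyc_energy J y + (y 1 + y J)^2) | y. nonzero_vec J y}"

definition is_max_of :: "real \<Rightarrow> real set \<Rightarrow> bool" where
  "is_max_of c S = (c \<in> S \<and> (\<forall>v\<in>S. v \<le> c))"

end

theory Submission imports Defs begin

definition cpred :: "nat \<Rightarrow> nat \<Rightarrow> nat" where
  "cpred J i = (if i = 1 then J else i - 1)"

lemma succ_in: "J \<ge> 1 \<Longrightarrow> j \<in> {1..J} \<Longrightarrow> cyc_succ J j \<in> {1..J}"
  by (auto simp: cyc_succ_def)

lemma pred_in: "J \<ge> 1 \<Longrightarrow> j \<in> {1..J} \<Longrightarrow> cpred J j \<in> {1..J}"
  by (auto simp: cpred_def)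

lemma pred_succ: "J \<ge> 1 \<Longrightarrow> j \<in> {1..J} \<Longrightarrow> cpred J (cyc_succ J j) = j"
  by (auto simp: cyc_succ_def cpred_def)

lemma succ_pred: "J \<ge> 1 \<Longrightarrow> j \<in> {1..J} \<Longrightarrow> cyc_succ J (cpred J j) = j"
  by (auto simp: cyc_succ_def cpred_def)

lemma reindex_succ:
  assumes "J \<ge> 1"
  shows "(\<Sum>j=1..J. h (cyc_succ J j)) = (\<Sum>j=1..J. (h j :: real))"
  by (rule sum.reindex_bij_witness[where i="cpred J" and j="cyc_succ J"])
     (use assms succ_in pred_in pred_succ succ_pred in auto)

lemma edge_ineq:
  fixes a b pa pb :: real
  assumes "0 \<le> pa" "0 \<le> pb" "pa = 0 \<Longrightarrow> a = 0" "pb = 0 \<Longrightarrow> b = 0"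
  shows "(b - a)^2 \<ge> (1 - pb/pa) * a^2 + (1 - pa/pb) * b^2"
proof (cases "pa = 0 \<or> pb = 0")
  case True then show ?thesis using assms by (auto simp: power2_eq_square)
next
  case False
  then have p: "pa > 0" "pb > 0" using assms by auto
  have "0 \<le> pa * pb * (a/pa - b/pb)^2" using p by simp
  also have "\<dots> = (b - a)^2 - ((1 - pb/pa) * a^2 + (1 - pa/pb) * b^2)"
    using p by (simp add: field_simps power2_eq_square)
  finally show ?thesis by simp
qed

lemma edge_eq:
  fixes a b :: real
  shows "(b - a)^2 = (1 - b/a) * a^2 + (1 - a/b) * b^2"
  by (cases "a = 0"; cases "b = 0") (auto simp: field_simps power2_eq_square)

lemma core_eq:
  assumes "J \<ge> 1"
  shows "(\<Sum>j=1..J. A j * (z j)^2 + B (cyc_succ J j) * (z (cyc_succ J j))^2)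
       = (\<Sum>i=1..J. (A i + B i) * (z i :: real)^2)"
proof -
  have "(\<Sum>j=1..J. A j * (z j)^2 + B (cyc_succ J j) * (z (cyc_succ J j))^2)
     = (\<Sum>j=1..J. A j * (z j)^2) + (\<Sum>j=1..J. (\<lambda>i. B i * (z i)^2) (cyc_succ J j))"
    by (simp add: sum.distrib)
  also have "\<dots> = (\<Sum>j=1..J. A j * (z j)^2) + (\<Sum>j=1..J. B j * (z j)^2)"
    using reindex_succ[OF assms] by simp
  also have "\<dots> = (\<Sum>i=1..J. (A i + B i) * (z i)^2)"
    by (simp add: sum.distrib[symmetric] algebra_simps)
  finally show ?thesis .
qed

lemma core_ge:
  assumes "J \<ge> 1"
    and "\<And>j. j \<in> {1..J} \<Longrightarrow> e j \<ge> A j * (z j)^2 + B (cyc_succ J j) * (z (cyc_succ J j))^2"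
    and "\<And>i. i \<in> {1..J} \<Longrightarrow> (A i + B i) * (z i)^2 \<ge> l * (z i :: real)^2"
  shows "(\<Sum>j=1..J. e j) \<ge> l * sqnorm J z"
proof -
  have "l * sqnorm J z = (\<Sum>i=1..J. l * (z i)^2)" by (simp add: sqnorm_def sum_distrib_left)
  also have "\<dots> \<le> (\<Sum>i=1..J. (A i + B i) * (z i)^2)" by (rule sum_mono) (use assms(3) in auto)
  also have "\<dots> = (\<Sum>j=1..J. A j * (z j)^2 + B (cyc_succ J j) * (z (cyc_succ J j))^2)"
    using core_eq[OF assms(1)] by simp
  also have "\<dots> \<le> (\<Sum>j=1..J. e j)" by (rule sum_mono) (use assms(2) in auto)
  finally show ?thesis .
qed

lemma core_equal:
  assumes "J \<ge> 1"
    and "\<And>j. j \<in> {1..J} \<Longrightarrow> e j = A j * (z j)^2 + B (cyc_succ J j) * (z (cyc_succ J j))^2"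
    and "\<And>i. i \<in> {1..J} \<Longrightarrow> (A i + B i) * (z i)^2 = l * (z i :: real)^2"
  shows "(\<Sum>j=1..J. e j) = l * sqnorm J z"
proof -
  have "l * sqnorm J z = (\<Sum>i=1..J. l * (z i)^2)" by (simp add: sqnorm_def sum_distrib_left)
  also have "\<dots> = (\<Sum>i=1..J. (A i + B i) * (z i)^2)" by (rule sum.cong) (use assms(3) in auto)
  also have "\<dots> = (\<Sum>j=1..J. A j * (z j)^2 + B (cyc_succ J j) * (z (cyc_succ J j))^2)"
    using core_eq[OF assms(1)] by simp
  also have "\<dots> = (\<Sum>j=1..J. e j)" by (rule sum.cong) (use assms(2) in auto)
  finally show ?thesis by simp
qed


lemma trig_sum: "sin (x + a) + sin (x - a) = 2 * cos (a::real) * sin x"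
  by (simp add: sin_add sin_diff)

lemma sin_shift_pi: "\<bar>sin (x + pi)\<bar> = \<bar>sin x\<bar>" "\<bar>sin (x - pi)\<bar> = \<bar>sin x\<bar>"
  by (simp_all add: sin_add sin_diff)

lemma sin_pos_range:
  assumes "J \<ge> 2" "0 < m" "m < real J"
  shows "sin (pi / J * m) > 0"
proof -
  have "pi / J * m < pi / J * J" using assms by (intro mult_strict_left_mono) auto
  also have "\<dots> = pi" using assms by simp
  finally show ?thesis using assms by (intro sin_gt_zero) auto
qed

lemma sin_nonneg_range:
  assumes "J \<ge> 2" "0 \<le> m" "m \<le> real J"
  shows "sin (pi / J * m) \<ge> 0"
proof -
  have "pi / J * m \<le> pi / J * J" using assms by (intro mult_left_mono) auto
  also have "\<dots> = pi" using assms by simp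
  finally show ?thesis using assms by (intro sin_ge_zero) auto
qed

lemma sin_minusJ:
  assumes "J \<ge> 2"
  shows "sin (pi / J * m) = - sin (pi / J * (m - real J))"
proof -
  have "pi / J * m = pi / J * (m - real J) + pi" using assms by (simp add: field_simps)
  then show ?thesis by (simp add: sin_add)
qed

lemma F3:
  fixes n :: nat
  assumes J: "J \<ge> 2" and n: "1 \<le> n" "n \<le> 2*J - 1" "n \<noteq> J"
  shows "sin (pi / J * real n) \<noteq> 0"
    and "\<bar>sin (pi / J * (real n + 1))\<bar> + \<bar>sin (pi / J * (real n - 1))\<bar>
         = 2 * cos (pi / J) * \<bar>sin (pi / J * real n)\<bar>"
proof -
  have ts: "sin (pi / J * (real n + 1)) + sin (pi / J * (real n - 1)) = 2 * cos (pi/J) * sin (pi / J * real n)"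
  proof -
    have e1: "pi / J * (real n + 1) = pi / J * real n + pi / J" by (simp only: distrib_left mult_1_right)
    have e2: "pi / J * (real n - 1) = pi / J * real n - pi / J" by (simp only: right_diff_distrib mult_1_right)
    show ?thesis unfolding e1 e2 by (rule trig_sum)
  qed
  consider "n < J" | "n > J" using n by linarith
  then have "sin (pi / J * real n) \<noteq> 0 \<and> \<bar>sin (pi / J * (real n + 1))\<bar> + \<bar>sin (pi / J * (real n - 1))\<bar>
         = 2 * cos (pi / J) * \<bar>sin (pi / J * real n)\<bar>"
  proof cases
    case 1
    have a: "sin (pi / J * real n) > 0" using 1 n J by (intro sin_pos_range) auto
    have b: "sin (pi / J * (real n + 1)) \<ge> 0" using 1 n J by (intro sin_nonneg_range) auto
    have c: "sin (pi / J * (real n - 1)) \<ge> 0" using 1 n J by (intro sin_nonneg_range) auto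
    show ?thesis using a b c ts by simp
  next
    case 2
    have a: "sin (pi / J * (real n - J)) > 0" using 2 n J by (intro sin_pos_range) auto
    have b: "sin (pi / J * (real n + 1 - J)) \<ge> 0" using 2 n J by (intro sin_nonneg_range) auto
    have c: "sin (pi / J * (real n - 1 - J)) \<ge> 0" using 2 n J by (intro sin_nonneg_range) auto
    have a': "sin (pi / J * real n) < 0" using a sin_minusJ[OF J, of "real n"] by simp
    have b': "sin (pi / J * (real n + 1)) \<le> 0" using b sin_minusJ[OF J, of "real n + 1"] by simp
    have c': "sin (pi / J * (real n - 1)) \<le> 0" using c sin_minusJ[OF J, of "real n - 1"] by simp
    show ?thesis using a' b' c' ts by simp
  qed
  then show "sin (pi / J * real n) \<noteq> 0"
    and "\<bar>sin (pi / J * (real n + 1))\<bar> + \<bar>sin (pi / J * (real n - 1))\<bar>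
         = 2 * cos (pi / J) * \<bar>sin (pi / J * real n)\<bar>" by auto
qed

definition phiZ :: "nat \<Rightarrow> nat \<Rightarrow> nat \<Rightarrow> real" where
  "phiZ J k j = \<bar>sin (pi / J * real (j + J - k))\<bar>"

lemma phiZ_succ:
  assumes J: "J \<ge> 2" and j: "j \<in> {1..J}" and k: "k \<in> {1..J}"
  shows "phiZ J k (cyc_succ J j) = \<bar>sin (pi / J * (real (j + J - k) + 1))\<bar>"
proof (cases "j = J")
  case True
  have "real (1 + J - k) = (real (j + J - k) + 1) - J" using True k by auto
  then have "pi / J * real (1 + J - k) = pi / J * (real (j + J - k) + 1) - pi / J * J"
    by (simp only: right_diff_distrib)
  then have "pi / J * real (1 + J - k) = pi / J * (real (j + J - k) + 1) - pi"
    using J by simp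
  then show ?thesis using True by (simp add: phiZ_def cyc_succ_def sin_shift_pi)
next
  case False
  have "real (j + 1 + J - k) = real (j + J - k) + 1" using k by auto
  then show ?thesis using False by (simp add: phiZ_def cyc_succ_def)
qed

lemma phiZ_pred:
  assumes J: "J \<ge> 2" and j: "j \<in> {1..J}" and k: "k \<in> {1..J}"
  shows "phiZ J k (cpred J j) = \<bar>sin (pi / J * (real (j + J - k) - 1))\<bar>"
proof (cases "j = 1")
  case True
  have "real (J + J - k) = (real (j + J - k) - 1) + J" using True k by auto
  then have "pi / J * real (J + J - k) = pi / J * (real (j + J - k) - 1) + pi / J * J"
    by (simp only: distrib_left)
  then have "pi / J * real (J + J - k) = pi / J * (real (j + J - k) - 1) + pi"
    using J by simp
  then show ?thesis using True by (simp add: phiZ_def cpred_def sin_shift_pi)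
next
  case False
  have "real (j - 1 + J - k) = real (j + J - k) - 1" using k j False by auto
  then show ?thesis using False unfolding phiZ_def cpred_def by (simp add: algebra_simps)
qed

lemma phiZ_nz:
  assumes J: "J \<ge> 2" and j: "j \<in> {1..J}" and k: "k \<in> {1..J}" and "j \<noteq> k"
  shows "phiZ J k j \<noteq> 0"
proof -
  have "1 \<le> j + J - k" "j + J - k \<le> 2*J - 1" "j + J - k \<noteq> J" using assms by auto
  from F3(1)[OF J this] show ?thesis unfolding phiZ_def by simp
qed

lemma phiZ_zero: "J \<ge> 2 \<Longrightarrow> phiZ J k k = 0"
  by (simp add: phiZ_def)

lemma phiZ_node:
  assumes J: "J \<ge> 2" and j: "j \<in> {1..J}" and k: "k \<in> {1..J}" and "j \<noteq> k"
  shows "phiZ J k (cyc_succ J j) + phiZ J k (cpred J j) = 2 * cos (pi / J) * phiZ J k j"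
proof -
  have "1 \<le> j + J - k" "j + J - k \<le> 2*J - 1" "j + J - k \<noteq> J" using assms by auto
  from F3(2)[OF J this] show ?thesis
    using phiZ_succ[OF J j k] phiZ_pred[OF J j k] unfolding phiZ_def by simp
qed


lemma node_coef:
  assumes J: "J \<ge> 2" and i: "i \<in> {1..J}" and k: "k \<in> {1..J}" and "i \<noteq> k"
  shows "(1 - phiZ J k (cyc_succ J i) / phiZ J k i) + (1 - phiZ J k (cpred J i) / phiZ J k i)
       = 2 * (1 - cos (pi / J))"
proof -
  have nz: "phiZ J k i \<noteq> 0" using phiZ_nz assms by blast
  have "(1 - phiZ J k (cyc_succ J i) / phiZ J k i) + (1 - phiZ J k (cpred J i) / phiZ J k i)
     = 2 - (phiZ J k (cyc_succ J i) + phiZ J k (cpred J i)) / phiZ J k i"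
    by (simp add: add_divide_distrib)
  also have "\<dots> = 2 - 2 * cos (pi / J)" using phiZ_node[OF assms] nz by simp
  finally show ?thesis by simp
qed

lemma zero_bound:
  assumes J: "J \<ge> 2" and k: "k \<in> {1..J}" and zk: "z k = 0"
  shows "cyc_energy J z \<ge> 2 * (1 - cos (pi / J)) * sqnorm J z"
  unfolding cyc_energy_def
proof (rule core_ge[where A="\<lambda>j. 1 - phiZ J k (cyc_succ J j) / phiZ J k j"
                     and B="\<lambda>i. 1 - phiZ J k (cpred J i) / phiZ J k i"])
  show "1 \<le> J" using J by simp
next
  fix j assume j: "j \<in> {1..J}"
  have sj: "cyc_succ J j \<in> {1..J}" using succ_in j J by simp
  have zz: "\<And>x. x \<in> {1..J} \<Longrightarrow> phiZ J k x = 0 \<Longrightarrow> z x = 0"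
    using phiZ_nz[OF J _ k] zk by blast
  have "(z (cyc_succ J j) - z j)^2 \<ge> (1 - phiZ J k (cyc_succ J j) / phiZ J k j) * (z j)^2
          + (1 - phiZ J k j / phiZ J k (cyc_succ J j)) * (z (cyc_succ J j))^2"
    by (rule edge_ineq) (use zz j sj in \<open>auto simp: phiZ_def\<close>)
  then show "(z (cyc_succ J j) - z j)^2 \<ge> (1 - phiZ J k (cyc_succ J j) / phiZ J k j) * (z j)^2
          + (1 - phiZ J k (cpred J (cyc_succ J j)) / phiZ J k (cyc_succ J j)) * (z (cyc_succ J j))^2"
    using pred_succ[of J j] J j by simp
next
  fix i assume i: "i \<in> {1..J}"
  show "((1 - phiZ J k (cyc_succ J i) / phiZ J k i) + (1 - phiZ J k (cpred J i) / phiZ J k i)) * (z i)^2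
        \<ge> 2 * (1 - cos (pi / J)) * (z i)^2"
    using node_coef[OF J i k] zk by (cases "i = k") auto
qed

lemma witness1:
  assumes J: "J \<ge> 2"
  shows "cyc_energy J (phiZ J 1) = 2 * (1 - cos (pi / J)) * sqnorm J (phiZ J 1)"
  unfolding cyc_energy_def
proof (rule core_equal[where A="\<lambda>j. 1 - phiZ J 1 (cyc_succ J j) / phiZ J 1 j"
                     and B="\<lambda>i. 1 - phiZ J 1 (cpred J i) / phiZ J 1 i"])
  show "1 \<le> J" using J by simp
next
  fix j assume j: "j \<in> {1..J}"
  show "(phiZ J 1 (cyc_succ J j) - phiZ J 1 j)^2 = (1 - phiZ J 1 (cyc_succ J j) / phiZ J 1 j) * (phiZ J 1 j)^2
          + (1 - phiZ J 1 (cpred J (cyc_succ J j)) / phiZ J 1 (cyc_succ J j)) * (phiZ J 1 (cyc_succ J j))^2"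
    using pred_succ[of J j] J j edge_eq by simp
next
  fix i assume i: "i \<in> {1..J}"
  have k: "(1::nat) \<in> {1..J}" using J by simp
  show "((1 - phiZ J 1 (cyc_succ J i) / phiZ J 1 i) + (1 - phiZ J 1 (cpred J i) / phiZ J 1 i)) * (phiZ J 1 i)^2
        = 2 * (1 - cos (pi / J)) * (phiZ J 1 i)^2"
    using node_coef[OF J i k] phiZ_zero[OF J, of 1] by (cases "i = 1") auto
qed

lemma lam_pos: "J \<ge> 2 \<Longrightarrow> 2 * (1 - cos (pi / real J)) > 0"
proof -
  assume J: "J \<ge> 2"
  have "0 < pi / real J" using J by simp
  moreover have "pi / real J < pi" using J by (simp add: divide_less_eq)
  ultimately have "cos (pi / real J) < cos 0" by (intro cos_monotone_0_pi) auto
  then show ?thesis by simp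
qed

definition pos_part :: "(nat \<Rightarrow> real) \<Rightarrow> nat \<Rightarrow> real" where "pos_part x j = max (x j) 0"
definition neg_part :: "(nat \<Rightarrow> real) \<Rightarrow> nat \<Rightarrow> real" where "neg_part x j = max (- x j) 0"

lemma split_edge: "((b::real) - a)^2 \<ge> (max b 0 - max a 0)^2 + (max (-b) 0 - max (-a) 0)^2"
  by (cases "a \<ge> 0"; cases "b \<ge> 0") (auto simp: power2_eq_square algebra_simps max_def mult_nonneg_nonpos mult_nonpos_nonneg)

lemma split_sq: "(a::real)^2 = (max a 0)^2 + (max (-a) 0)^2"
  by (cases "a \<ge> 0") (auto simp: max_def)

lemma set1_bound:
  assumes J: "J \<ge> 2" and mn: "Min (x ` {1..J}) \<le> 0" and mx: "0 \<le> Max (x ` {1..J})"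
  shows "cyc_energy J x \<ge> 2 * (1 - cos (pi / J)) * sqnorm J x"
proof -
  let ?l = "2 * (1 - cos (pi / J))"
  have ne: "x ` {1..J} \<noteq> {}" using J by auto
  obtain k where k: "k \<in> {1..J}" "x k = Min (x ` {1..J})"
    using Min_in[OF _ ne] by auto
  obtain k' where k': "k' \<in> {1..J}" "x k' = Max (x ` {1..J})"
    using Max_in[OF _ ne] by auto
  have p0: "pos_part x k = 0" using k mn by (simp add: pos_part_def)
  have "x k' \<ge> 0" using k' mx by simp
  then have n0: "neg_part x k' = 0" by (simp add: neg_part_def)
  have "cyc_energy J x \<ge> cyc_energy J (pos_part x) + cyc_energy J (neg_part x)"
    unfolding cyc_energy_def sum.distrib[symmetric]
    by (rule sum_mono) (simp add: pos_part_def neg_part_def split_edge)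
  moreover have "cyc_energy J (pos_part x) \<ge> ?l * sqnorm J (pos_part x)"
    by (rule zero_bound[where z="pos_part x", OF J k(1) p0])
  moreover have "cyc_energy J (neg_part x) \<ge> ?l * sqnorm J (neg_part x)"
    by (rule zero_bound[where z="neg_part x", OF J k'(1) n0])
  moreover have "sqnorm J x = sqnorm J (pos_part x) + sqnorm J (neg_part x)"
    unfolding sqnorm_def sum.distrib[symmetric]
    by (rule sum.cong) (auto simp: pos_part_def neg_part_def intro: split_sq)
  ultimately show ?thesis by (simp add: distrib_left)
qed


definition phi2 :: "nat \<Rightarrow> nat \<Rightarrow> real" where
  "phi2 J j = sin (pi / (2 * J) * (2 * real j - 1))"

lemma phi2_pos:
  assumes J: "J \<ge> 2" and j: "j \<in> {1..J}"
  shows "phi2 J j > 0"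
proof -
  have "pi / (2 * J) * (2 * real j - 1) < pi / (2 * J) * (2 * J)"
    using J j by (intro mult_strict_left_mono) auto
  also have "\<dots> = pi" using J by simp
  finally show ?thesis unfolding phi2_def using J j by (intro sin_gt_zero) auto
qed

lemma aux_lin1: "(b::real) * (2 * (x + 1) - 1) = b * (2 * x - 1) + 2 * b"
  by (simp add: algebra_simps)
lemma aux_lin2: "(b::real) * (2 * (x - 1) - 1) = b * (2 * x - 1) - 2 * b"
  by (simp add: algebra_simps)
lemma aux_lin3: "(b::real) * (2 * x) = p \<Longrightarrow> b * (2 * x - 1) = p - b"
  by (simp add: algebra_simps)
lemma aux_lin4: "(b::real) * (2 * x) = p \<Longrightarrow> b * (2 * (x - 1) - 1) = p - 3 * b"
  by (simp add: algebra_simps)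

lemma phi2_mid:
  assumes J: "J \<ge> 2" and i: "2 \<le> i" "i \<le> J - 1"
  shows "phi2 J (i + 1) + phi2 J (i - 1) = 2 * cos (pi / J) * phi2 J i"
proof -
  let ?b = "pi / (2 * J)"
  have e1: "?b * (2 * real (i + 1) - 1) = ?b * (2 * real i - 1) + 2 * ?b"
    unfolding of_nat_add of_nat_1 by (rule aux_lin1)
  have e2: "?b * (2 * real (i - 1) - 1) = ?b * (2 * real i - 1) - 2 * ?b"
  proof -
    have "real (i - 1) = real i - 1" using i by simp
    then show ?thesis by (simp only: aux_lin2)
  qed
  have e3: "2 * ?b = pi / J" by simp
  show ?thesis unfolding phi2_def e1 e2 trig_sum e3 ..
qed

lemma phi2_ends:
  assumes J: "J \<ge> 2"
  shows "phi2 J 2 = (1 + 2 * cos (pi / J)) * phi2 J 1"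
    and "phi2 J (J - 1) = (1 + 2 * cos (pi / J)) * phi2 J J"
proof -
  let ?b = "pi / (2 * J)"
  have t: "sin (3 * ?b) = (1 + 2 * cos (pi / J)) * sin ?b"
  proof -
    have "sin (?b + 2 * ?b) + sin (?b - 2 * ?b) = 2 * cos (2 * ?b) * sin ?b" by (rule trig_sum)
    moreover have "2 * ?b = pi / J" by simp
    ultimately show ?thesis by (simp add: algebra_simps)
  qed
  have pJ: "?b * (2 * real J) = pi" using J by simp
  show "phi2 J 2 = (1 + 2 * cos (pi / J)) * phi2 J 1"
    using t unfolding phi2_def by (simp add: mult.commute)
  have a1: "?b * (2 * real J - 1) = pi - ?b" using pJ by (rule aux_lin3)
  have a2: "?b * (2 * real (J - 1) - 1) = pi - 3 * ?b"
    using J aux_lin4[OF pJ] unfolding of_nat_diff[of 1 J] by simp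
  show "phi2 J (J - 1) = (1 + 2 * cos (pi / J)) * phi2 J J"
    unfolding phi2_def a1 a2 sin_pi_minus using t .
qed

abbreviation A2 where "A2 J j \<equiv> (if j = J then 2 else 1 - phi2 J (j + 1) / phi2 J j)"
abbreviation B2 where "B2 J i \<equiv> (if i = 1 then 2 else 1 - phi2 J (i - 1) / phi2 J i)"

lemma node2:
  assumes J: "J \<ge> 2" and i: "i \<in> {1..J}"
  shows "A2 J i + B2 J i = 2 * (1 - cos (pi / J))"
proof -
  have p: "phi2 J i > 0" using phi2_pos[OF J i] .
  consider "i = 1" | "i = J" | "2 \<le> i \<and> i \<le> J - 1" using i by force
  then show ?thesis
  proof cases
    case 1
    have "1 \<noteq> J" using J by simp
    then show ?thesis using 1 phi2_ends(1)[OF J, unfolded numeral_2_eq_2] p by (simp add: field_simps)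
  next
    case 2
    have "J \<noteq> 1" using J by simp
    then show ?thesis using 2 phi2_ends(2)[OF J] p by (simp add: field_simps)
  next
    case 3
    then have "i \<noteq> 1" "i \<noteq> J" by auto
    have m: "phi2 J (i + 1) + phi2 J (i - 1) = 2 * cos (pi / J) * phi2 J i"
      using phi2_mid[OF J] 3 by blast
    have "A2 J i + B2 J i = 2 - (phi2 J (i + 1) + phi2 J (i - 1)) / phi2 J i"
      using \<open>i \<noteq> 1\<close> \<open>i \<noteq> J\<close> by (simp add: add_divide_distrib)
    also have "\<dots> = 2 - 2 * cos (pi / J)" unfolding m using p by simp
    finally show ?thesis by simp
  qed
qed

definition e2 :: "nat \<Rightarrow> (nat \<Rightarrow> real) \<Rightarrow> nat \<Rightarrow> real" where
  "e2 J y j = (y (cyc_succ J j) - y j)^2 + (if j = J then (y 1 + y J)^2 else 0)"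

lemma e2_sum:
  assumes J: "J \<ge> 2"
  shows "(\<Sum>j=1..J. e2 J y j) = cyc_energy J y + (y 1 + y J)^2"
proof -
  have "(\<Sum>j=1..J. (if j = J then (y 1 + y J)^2 else 0)) = (y 1 + y J)^2"
    using J by (simp add: sum.delta')
  then show ?thesis unfolding e2_def cyc_energy_def sum.distrib by simp
qed

lemma e2_edge:
  assumes J: "J \<ge> 2" and j: "j \<in> {1..J}"
  shows "e2 J y j \<ge> A2 J j * (y j)^2 + B2 J (cyc_succ J j) * (y (cyc_succ J j))^2"
    and "e2 J (phi2 J) j = A2 J j * (phi2 J j)^2 + B2 J (cyc_succ J j) * (phi2 J (cyc_succ J j))^2"
proof -
  have "e2 J y j \<ge> A2 J j * (y j)^2 + B2 J (cyc_succ J j) * (y (cyc_succ J j))^2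
     \<and> e2 J (phi2 J) j = A2 J j * (phi2 J j)^2 + B2 J (cyc_succ J j) * (phi2 J (cyc_succ J j))^2"
  proof (cases "j = J")
    case True
    have "J \<noteq> 1" using J by simp
    then show ?thesis using True
      by (simp add: e2_def cyc_succ_def power2_eq_square algebra_simps)
  next
    case False
    have j1: "j + 1 \<in> {1..J}" "j + 1 \<noteq> 1" using j False by auto
    have p: "phi2 J j > 0" "phi2 J (j+1) > 0" using phi2_pos[OF J] j j1 by auto
    have "(y (j+1) - y j)^2 \<ge> (1 - phi2 J (j+1) / phi2 J j) * (y j)^2 + (1 - phi2 J j / phi2 J (j+1)) * (y (j+1))^2"
      by (rule edge_ineq) (use p in auto)
    moreover have "(phi2 J (j+1) - phi2 J j)^2 = (1 - phi2 J (j+1) / phi2 J j) * (phi2 J j)^2 + (1 - phi2 J j / phi2 J (j+1)) * (phi2 J (j+1))^2"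
      by (rule edge_eq)
    ultimately show ?thesis using False j1 by (simp add: e2_def cyc_succ_def)
  qed
  then show "e2 J y j \<ge> A2 J j * (y j)^2 + B2 J (cyc_succ J j) * (y (cyc_succ J j))^2"
    and "e2 J (phi2 J) j = A2 J j * (phi2 J j)^2 + B2 J (cyc_succ J j) * (phi2 J (cyc_succ J j))^2"
    by auto
qed

lemma set2_bound:
  assumes J: "J \<ge> 2"
  shows "cyc_energy J y + (y 1 + y J)^2 \<ge> 2 * (1 - cos (pi / J)) * sqnorm J y"
  unfolding e2_sum[OF J, symmetric]
  by (rule core_ge[where A="A2 J" and B="B2 J"]) (use J e2_edge(1)[OF J] node2[OF J] in auto)

lemma witness2:
  assumes J: "J \<ge> 2"
  shows "cyc_energy J (phi2 J) + (phi2 J 1 + phi2 J J)^2 = 2 * (1 - cos (pi / J)) * sqnorm J (phi2 J)"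
  unfolding e2_sum[OF J, symmetric]
  by (rule core_equal[where A="A2 J" and B="B2 J"]) (use J e2_edge(2)[OF J] node2[OF J] in auto)


lemma sqnorm_pos: assumes "nonzero_vec J x" shows "sqnorm J x > 0"
proof -
  obtain j where j: "j \<in> {1..J}" "x j \<noteq> 0" using assms by (auto simp: nonzero_vec_def)
  have "0 < (x j)^2" using j by simp
  also have "\<dots> \<le> sqnorm J x" unfolding sqnorm_def by (rule member_le_sum) (use j in auto)
  finally show ?thesis .
qed

lemma quot_le: "(s::real) > 0 \<Longrightarrow> l > 0 \<Longrightarrow> E \<ge> l * s \<Longrightarrow> s / E \<le> 1 / l"
proof -
  assume a: "s > 0" "l > 0" "E \<ge> l * s"
  have "l * s > 0" using a by simp
  then have E0: "E > 0" using a by linarith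
  have "s / E \<le> s / (l * s)" using a E0 \<open>l * s > 0\<close> by (intro divide_left_mono) (simp_all add: E0 \<open>l * s > 0\<close> less_imp_le)
  also have "\<dots> = 1 / l" using a by simp
  finally show ?thesis .
qed

lemma quot_eq: "(s::real) > 0 \<Longrightarrow> l > 0 \<Longrightarrow> E = l * s \<Longrightarrow> s / E = 1 / l"
  by simp

theorem lemma4p1:
  fixes J :: nat
  assumes "J \<ge> 2"
  shows "is_max_of (1 / (2 * (1 - cos (pi / real J)))) (quot_set1 J)
       \<and> is_max_of (1 / (2 * (1 - cos (pi / real J)))) (quot_set2 J)"
proof -
  note J = assms
  let ?l = "2 * (1 - cos (pi / real J))"
  have lp: "?l > 0" using lam_pos[OF J] .
  have s1: "is_max_of (1 / ?l) (quot_set1 J)"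
    unfolding is_max_of_def
  proof
    let ?x = "phiZ J 1"
    have k1: "(1::nat) \<in> {1..J}" "(2::nat) \<in> {1..J}" using J by auto
    have nz: "nonzero_vec J ?x" unfolding nonzero_vec_def
      using phiZ_nz[OF J k1(2) k1(1)] k1 by auto
    have z1: "?x 1 = 0" using phiZ_zero[OF J] .
    have fin: "finite (?x ` {1..J})" by simp
    have "Min (?x ` {1..J}) \<le> ?x 1" using k1 by (intro Min_le) auto
    then have mn: "Min (?x ` {1..J}) \<le> 0" using z1 by simp
    have "?x 1 \<le> Max (?x ` {1..J})" using k1 by (intro Max_ge) auto
    then have mx: "0 \<le> Max (?x ` {1..J})" using z1 by simp
    have eq: "sqnorm J ?x / cyc_energy J ?x = 1 / ?l"
      using quot_eq[OF sqnorm_pos[OF nz] lp witness1[OF J]] .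
    show "1 / ?l \<in> quot_set1 J" unfolding quot_set1_def
      by (rule CollectI, rule exI[where x="?x"]) (use eq[symmetric] nz mn mx in simp)
  next
    show "\<forall>v\<in>quot_set1 J. v \<le> 1 / ?l"
    proof
      fix v assume "v \<in> quot_set1 J"
      then obtain x where x: "v = sqnorm J x / cyc_energy J x" "nonzero_vec J x"
        "Min (x ` {1..J}) \<le> 0" "0 \<le> Max (x ` {1..J})" unfolding quot_set1_def by blast
      show "v \<le> 1 / ?l" unfolding x(1)
        by (rule quot_le[OF sqnorm_pos[OF x(2)] lp set1_bound[OF J x(3) x(4)]])
    qed
  qed
  have s2: "is_max_of (1 / ?l) (quot_set2 J)"
    unfolding is_max_of_def
  proof
    let ?y = "phi2 J"
    have k1: "(1::nat) \<in> {1..J}" using J by auto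
    have nz: "nonzero_vec J ?y" unfolding nonzero_vec_def
      using phi2_pos[OF J k1] k1 by force
    have eq: "sqnorm J ?y / (cyc_energy J ?y + (?y 1 + ?y J)^2) = 1 / ?l"
      using quot_eq[OF sqnorm_pos[OF nz] lp witness2[OF J]] .
    show "1 / ?l \<in> quot_set2 J" unfolding quot_set2_def
      by (rule CollectI, rule exI[where x="?y"]) (use eq[symmetric] nz in simp)
  next
    show "\<forall>v\<in>quot_set2 J. v \<le> 1 / ?l"
    proof
      fix v assume "v \<in> quot_set2 J"
      then obtain y where y: "v = sqnorm J y / (cyc_energy J y + (y 1 + y J)^2)" "nonzero_vec J y"
        unfolding quot_set2_def by blast
      show "v \<le> 1 / ?l" unfolding y(1)
        by (rule quot_le[OF sqnorm_pos[OF y(2)] lp set2_bound[OF J]])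
    qed
  qed
  show ?thesis using s1 s2 by simp
qed

end
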